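(* Let $[X,d,m]$ be a metric random walk space with invariant and reversible probability measure $\nu$. Then $h_m(X)=\lambda_1^m(X)$, where $$h_m(X)=\inf\Big\{\frac{P_m(D)}{\min\{\nu(D),\nu(X\setminus D)\}}: D\subset X \ \nu\text{-measurable},\ 0<\nu(D)<1\Big\},$$ $$\lambda_1^m(X)=\inf\big\{TV_m(u): u\in L^1(X,\nu),\ \|u\|_{L^1(X,\nu)}=1,\ 0\in{\rm med}_\nu(u)\big\}.$$
   Context: A metric random walk space $[X,d,m]$ is a Polish metric space $(X,d)$ with a family $m=(m_x)_{x\in X}$ of Borel probability measures, $x\mapsto m_x(A)$ Borel measurable, each with finite first moment. A Radon measure $\nu$ is invariant if $\nu(A)=\int_X m_x(A)d\nu(x)$ for all $\nu$-measurable $A$, reversible if $dm_x(y)d\nu(x)=dm_y(x)d\nu(y)$. The $m$-perimeter is $P_m(E)=\int_E\int_{X\setminus E}dm_x(y)d\nu(x)$ and the $m$-total variation is $TV_m(u)=\frac12\int_X\int_X|u(y)-u(x)|\,dm_x(y)d\nu(x)$. A number $\mu$ is a median of $u$ with respect to $\nu$, written $\mu\in{\rm med}_\nu(u)$, if $\nu(\{u<\mu\})\le\frac12\nu(X)$ and $\nu(\{u>\mu\})\le\frac12\nu(X)$. *)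

theory Defs
  imports "HOL-Probability.Probability"
begin

definition mrw_space :: "('a::{polish_space,metric_space} \<Rightarrow> 'a measure) \<Rightarrow> bool" where
  "mrw_space m \<longleftrightarrow>
     (\<forall>x. prob_space (m x) \<and> sets (m x) = sets borel) \<and>
     (\<forall>A \<in> sets borel. (\<lambda>x. emeasure (m x) A) \<in> borel_measurable borel) \<and>
     (\<forall>x. (\<integral>\<^sup>+ y. ennreal (dist x y) \<partial>m x) < \<infinity>)"

definition invariant_measure :: "('a::topological_space \<Rightarrow> 'a measure) \<Rightarrow> 'a measure \<Rightarrow> bool" where
  "invariant_measure m \<nu> \<longleftrightarrow>
     (\<forall>A \<in> sets \<nu>. emeasure \<nu> A = (\<integral>\<^sup>+ x. emeasure (m x) A \<partial>\<nu>))"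

text \<open>Reversibility dm_x(y) d\<nu>(x) = dm_y(x) d\<nu>(y), as equality of the two measures on
  X \<times> X, tested on measurable rectangles A \<times> B.\<close>
definition reversible_measure :: "('a::topological_space \<Rightarrow> 'a measure) \<Rightarrow> 'a measure \<Rightarrow> bool" where
  "reversible_measure m \<nu> \<longleftrightarrow>
     (\<forall>A \<in> sets \<nu>. \<forall>B \<in> sets \<nu>.
        (\<integral>\<^sup>+ x. indicator A x * emeasure (m x) B \<partial>\<nu>) =
        (\<integral>\<^sup>+ x. indicator B x * emeasure (m x) A \<partial>\<nu>))"

definition m_perimeter :: "('a \<Rightarrow> 'a measure) \<Rightarrow> 'a measure \<Rightarrow> 'a set \<Rightarrow> ennreal" where
  "m_perimeter m \<nu> E = (\<integral>\<^sup>+ x. indicator E x * emeasure (m x) (UNIV - E) \<partial>\<nu>)"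

definition m_TV :: "('a \<Rightarrow> 'a measure) \<Rightarrow> 'a measure \<Rightarrow> ('a \<Rightarrow> real) \<Rightarrow> ennreal" where
  "m_TV m \<nu> u = (\<integral>\<^sup>+ x. (\<integral>\<^sup>+ y. ennreal \<bar>u y - u x\<bar> \<partial>m x) \<partial>\<nu>) / 2"

definition is_median :: "'a measure \<Rightarrow> ('a \<Rightarrow> real) \<Rightarrow> real \<Rightarrow> bool" where
  "is_median \<nu> u \<mu> \<longleftrightarrow>
     measure \<nu> {x \<in> space \<nu>. u x < \<mu>} \<le> measure \<nu> (space \<nu>) / 2 \<and>
     measure \<nu> {x \<in> space \<nu>. u x > \<mu>} \<le> measure \<nu> (space \<nu>) / 2"

text \<open>Cheeger constant h_m(X) (inf over the empty set is \<infinity>).\<close>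
definition cheeger_const :: "('a \<Rightarrow> 'a measure) \<Rightarrow> 'a measure \<Rightarrow> ennreal" where
  "cheeger_const m \<nu> =
     (INF D \<in> {D \<in> sets \<nu>. 0 < measure \<nu> D \<and> measure \<nu> D < 1}.
        m_perimeter m \<nu> D / ennreal (min (measure \<nu> D) (measure \<nu> (space \<nu> - D))))"

definition lambda1 :: "('a \<Rightarrow> 'a measure) \<Rightarrow> 'a measure \<Rightarrow> ennreal" where
  "lambda1 m \<nu> =
     (INF u \<in> {u. u \<in> borel_measurable \<nu> \<and> integrable \<nu> u \<and>
                  (\<integral>x. \<bar>u x\<bar> \<partial>\<nu>) = 1 \<and> is_median \<nu> u 0}.
        m_TV m \<nu> u)"

end

theory Submission
  imports Defs
begin

lemma fub:
  assumes "sigma_finite_measure M" "sigma_finite_measure N"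
    "case_prod f \<in> borel_measurable (M \<Otimes>\<^sub>M N)"
  shows "(\<integral>\<^sup>+x. (\<integral>\<^sup>+y. f x y \<partial>N) \<partial>M) = (\<integral>\<^sup>+y. (\<integral>\<^sup>+x. f x y \<partial>M) \<partial>N)"
  using pair_sigma_finite.Fubini'[of M N f] assms by (simp add: pair_sigma_finite_def)

lemma coarea_pt:
  fixes a b :: real
  shows "(\<integral>\<^sup>+t. indicator {min a b..<max a b} t \<partial>lborel) = ennreal \<bar>b - a\<bar>"
  by (simp add: max_def min_def abs_if)

lemma cheeger_bound:
  assumes P: "prob_space \<nu>" and S: "sets \<nu> = sets borel" and E: "E \<in> sets borel"
  shows "cheeger_const m \<nu> * ennreal (min (measure \<nu> E) (measure \<nu> (space \<nu> - E))) \<le> m_perimeter m \<nu> E"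
proof (cases "min (measure \<nu> E) (measure \<nu> (space \<nu> - E)) = 0")
  case True then show ?thesis by simp
next
  case False
  interpret prob_space \<nu> by fact
  have Ev: "E \<in> sets \<nu>" using E S by simp
  have pos: "0 < min (measure \<nu> E) (measure \<nu> (space \<nu> - E))" using False
    by (auto simp: min_def less_le)
  have "0 < measure \<nu> E" using pos by simp
  moreover have "measure \<nu> E < 1" using pos prob_compl[OF Ev] by simp
  ultimately have "E \<in> {D \<in> sets \<nu>. 0 < measure \<nu> D \<and> measure \<nu> D < 1}" using Ev by simp
  hence "cheeger_const m \<nu> \<le> m_perimeter m \<nu> E / ennreal (min (measure \<nu> E) (measure \<nu> (space \<nu> - E)))"
    unfolding cheeger_const_def by (rule INF_lower)
  then have "cheeger_const m \<nu> * ennreal (min (measure \<nu> E) (measure \<nu> (space \<nu> - E)))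
     \<le> m_perimeter m \<nu> E / ennreal (min (measure \<nu> E) (measure \<nu> (space \<nu> - E))) * ennreal (min (measure \<nu> E) (measure \<nu> (space \<nu> - E)))"
    by (rule mult_right_mono) simp
  also have "\<dots> = m_perimeter m \<nu> E"
  proof -
    have "ennreal (min (measure \<nu> E) (measure \<nu> (space \<nu> - E))) / ennreal (min (measure \<nu> E) (measure \<nu> (space \<nu> - E))) = 1"
      using pos by (intro ennreal_divide_self) auto
    then show ?thesis by (simp add: ennreal_divide_times)
  qed
  finally show ?thesis .
qed


lemma lower:
  fixes m :: "'a::{polish_space,metric_space} \<Rightarrow> 'a measure" and \<nu> :: "'a measure"
  assumes mrw: "mrw_space m" and P: "prob_space \<nu>" and S: "sets \<nu> = sets borel"
    and u[measurable]: "u \<in> borel_measurable \<nu>" and int: "integrable \<nu> u"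
    and one: "(\<integral>x. \<bar>u x\<bar> \<partial>\<nu>) = 1" and med: "is_median \<nu> u 0"
  shows "cheeger_const m \<nu> \<le> m_TV m \<nu> u"
proof -
  interpret prob_space \<nu> by fact
  define h where "h = cheeger_const m \<nu>"
  have sp: "space \<nu> = UNIV" using S by (metis sets_eq_imp_space_eq space_borel)
  have mx: "prob_space (m x)" "sets (m x) = sets borel" for x using mrw unfolding mrw_space_def by auto
  have kern: "(\<lambda>x. emeasure (m x) A) \<in> borel_measurable borel" if "A \<in> sets borel" for A
    using mrw that unfolding mrw_space_def by auto
  have ub[measurable]: "u \<in> borel_measurable borel" using u unfolding measurable_cong_sets[OF S refl, of borel] .
  have umx[measurable]: "u \<in> borel_measurable (m x)" for x using ub unfolding measurable_cong_sets[OF mx(2)[of x] refl, of borel] .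
  have msub: "m \<in> measurable borel (subprob_algebra borel)"
    by (rule measurable_subprob_algebra) (auto simp: mx kern prob_space_imp_subprob_space)
  have sfn: "sigma_finite_measure \<nu>" by (rule prob_space_imp_sigma_finite) fact
  have sfm: "sigma_finite_measure (m x)" for x by (rule prob_space_imp_sigma_finite) (rule mx)
  have sfl: "sigma_finite_measure lborel" by (rule lborel.sigma_finite_measure_axioms)
  define G where "G x y t = (indicator {min (u x) (u y)..<max (u x) (u y)} t :: ennreal)" for x y t
  define Sx where "Sx t = {x. t < u x}" for t
  have Sxb[measurable]: "Sx t \<in> sets borel" for t unfolding Sx_def by measurable
  have Gm: "(\<lambda>(y, t). G x y t) \<in> borel_measurable (m x \<Otimes>\<^sub>M lborel)" for x
    unfolding G_def indicator_def atLeastLessThan_iff by measurable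
  have Gk: "(\<lambda>(p, y). G (fst p) y (snd p)) \<in> borel_measurable ((\<nu> \<Otimes>\<^sub>M lborel) \<Otimes>\<^sub>M borel)"
    unfolding G_def indicator_def atLeastLessThan_iff by measurable
  have Fm: "(\<lambda>(x, t). (\<integral>\<^sup>+y. G x y t \<partial>m x)) \<in> borel_measurable (\<nu> \<Otimes>\<^sub>M lborel)"
  proof -
    have "(\<lambda>p. m (fst p)) \<in> measurable (\<nu> \<Otimes>\<^sub>M lborel) (subprob_algebra borel)"
    proof -
      have "m \<in> measurable \<nu> (subprob_algebra borel)"
        using msub unfolding measurable_cong_sets[OF S refl, of "subprob_algebra borel"] .
      then show ?thesis by (rule measurable_compose[OF measurable_fst])
    qed
    from nn_integral_measurable_subprob_algebra2[OF Gk this]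
    show ?thesis by (simp add: case_prod_beta')
  qed
  define k where "k x t = (indicator {min 0 (u x)..<max 0 (u x)} t :: ennreal)" for x t
  have km: "(\<lambda>(x, t). 2 * h * k x t) \<in> borel_measurable (\<nu> \<Otimes>\<^sub>M lborel)"
    unfolding k_def indicator_def atLeastLessThan_iff by measurable
  have kernu: "(\<lambda>x. emeasure (m x) B) \<in> borel_measurable \<nu>" if "B \<in> sets borel" for B
    using kern[OF that] unfolding measurable_cong_sets[OF S refl, of borel] .
  have s4: "(\<integral>\<^sup>+x. (\<integral>\<^sup>+y. G x y t \<partial>m x) \<partial>\<nu>) = m_perimeter m \<nu> (Sx t) + m_perimeter m \<nu> (UNIV - Sx t)" for t
  proof -
    have Gsplit: "G x y t = indicator (Sx t) x * indicator (UNIV - Sx t) y + indicator (UNIV - Sx t) x * indicator (Sx t) y" for x y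
      unfolding G_def Sx_def indicator_def by (auto simp: min_def max_def)
    have "(\<integral>\<^sup>+y. G x y t \<partial>m x) = indicator (Sx t) x * emeasure (m x) (UNIV - Sx t) + indicator (UNIV - Sx t) x * emeasure (m x) (Sx t)" for x
    proof -
      have [measurable]: "Sx t \<in> sets (m x)" using mx(2)[of x] by simp
      have [measurable]: "UNIV - Sx t \<in> sets (m x)" using mx(2)[of x] by simp
      show ?thesis unfolding Gsplit
        by (subst nn_integral_add) (auto simp: nn_integral_cmult nn_integral_indicator simp del: Compl_eq_Diff_UNIV)
    qed
    then have "(\<integral>\<^sup>+x. (\<integral>\<^sup>+y. G x y t \<partial>m x) \<partial>\<nu>) = (\<integral>\<^sup>+x. indicator (Sx t) x * emeasure (m x) (UNIV - Sx t) + indicator (UNIV - Sx t) x * emeasure (m x) (Sx t) \<partial>\<nu>)"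
      by simp
    also have "\<dots> = (\<integral>\<^sup>+x. indicator (Sx t) x * emeasure (m x) (UNIV - Sx t) \<partial>\<nu>) + (\<integral>\<^sup>+x. indicator (UNIV - Sx t) x * emeasure (m x) (Sx t) \<partial>\<nu>)"
    proof -
      have [measurable]: "Sx t \<in> sets \<nu>" using S by simp
      have [measurable]: "(\<lambda>x. emeasure (m x) (UNIV - Sx t)) \<in> borel_measurable \<nu>" by (rule kernu) simp
      have [measurable]: "(\<lambda>x. emeasure (m x) (Sx t)) \<in> borel_measurable \<nu>" by (rule kernu) simp
      show ?thesis by (rule nn_integral_add) auto
    qed
    also have "\<dots> = m_perimeter m \<nu> (Sx t) + m_perimeter m \<nu> (UNIV - Sx t)"
      unfolding m_perimeter_def by (simp add: double_diff)
    finally show ?thesis .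
  qed
  have half: "measure \<nu> (space \<nu>) / 2 = 1/2" by (simp add: prob_space)
  have medp: "measure \<nu> {x. 0 < u x} \<le> 1/2" and medn: "measure \<nu> {x. u x < 0} \<le> 1/2"
    using med half unfolding is_median_def sp by auto
  have s5: "2 * (\<integral>\<^sup>+x. h * k x t \<partial>\<nu>) \<le> m_perimeter m \<nu> (Sx t) + m_perimeter m \<nu> (UNIV - Sx t)" for t
  proof -
    have Sv[measurable]: "Sx t \<in> sets \<nu>" using S by simp
    have cS: "measure \<nu> (space \<nu> - Sx t) = 1 - measure \<nu> (Sx t)" by (rule prob_compl) (rule Sv)
    have cS2: "space \<nu> - (UNIV - Sx t) = Sx t" using sp by auto
    have cS3: "space \<nu> - Sx t = UNIV - Sx t" using sp by auto
    show ?thesis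
    proof (cases "0 \<le> t")
      case True
      have "k x t = indicator (Sx t) x" for x
        unfolding k_def Sx_def indicator_def using True by (auto simp: min_def max_def)
      then have "(\<integral>\<^sup>+x. h * k x t \<partial>\<nu>) = h * ennreal (measure \<nu> (Sx t))"
        by (simp add: nn_integral_cmult_indicator emeasure_eq_measure)
      moreover have "measure \<nu> (Sx t) \<le> 1/2"
        proof -
        have "{x. 0 < u x} \<in> sets borel" by measurable
        then have "{x. 0 < u x} \<in> sets \<nu>" using S by simp
        then have "measure \<nu> (Sx t) \<le> measure \<nu> {x. 0 < u x}"
          by (rule finite_measure_mono[rotated]) (use True in \<open>auto simp: Sx_def\<close>)
        then show ?thesis using medp by linarith
      qed
      ultimately have eq: "(\<integral>\<^sup>+x. h * k x t \<partial>\<nu>) = h * ennreal (min (measure \<nu> (Sx t)) (measure \<nu> (space \<nu> - Sx t)))"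
        using cS by simp
      have b1: "h * ennreal (min (measure \<nu> (Sx t)) (measure \<nu> (space \<nu> - Sx t))) \<le> m_perimeter m \<nu> (Sx t)"
        unfolding h_def by (rule cheeger_bound[OF P S Sxb])
      have b2: "h * ennreal (min (measure \<nu> (UNIV - Sx t)) (measure \<nu> (space \<nu> - (UNIV - Sx t)))) \<le> m_perimeter m \<nu> (UNIV - Sx t)"
        unfolding h_def by (rule cheeger_bound[OF P S]) simp
      have "min (measure \<nu> (UNIV - Sx t)) (measure \<nu> (space \<nu> - (UNIV - Sx t))) = min (measure \<nu> (Sx t)) (measure \<nu> (space \<nu> - Sx t))"
        unfolding cS2 cS3 by simp
      with b1 b2 eq show ?thesis by (simp add: mult_2 add_mono)
    next
      case False
      have "k x t = indicator (UNIV - Sx t) x" for x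
        unfolding k_def Sx_def indicator_def using False by (auto simp: min_def max_def)
      then have "(\<integral>\<^sup>+x. h * k x t \<partial>\<nu>) = h * ennreal (measure \<nu> (UNIV - Sx t))"
        proof -
        assume kk: "\<And>x. k x t = indicator (UNIV - Sx t) x"
        have Sv2: "UNIV - Sx t \<in> sets \<nu>" using sets.compl_sets[OF Sv] sp by simp
        have "(\<integral>\<^sup>+x. h * k x t \<partial>\<nu>) = (\<integral>\<^sup>+x. h * indicator (UNIV - Sx t) x \<partial>\<nu>)"
          by (simp only: kk)
        also have "\<dots> = h * emeasure \<nu> (UNIV - Sx t)" by (rule nn_integral_cmult_indicator[OF Sv2])
        finally show ?thesis by (simp add: emeasure_eq_measure del: Compl_eq_Diff_UNIV)
      qed
      moreover have "measure \<nu> (UNIV - Sx t) \<le> 1/2"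
        proof -
        have "{x. u x < 0} \<in> sets borel" by measurable
        then have "{x. u x < 0} \<in> sets \<nu>" using S by simp
        then have "measure \<nu> (UNIV - Sx t) \<le> measure \<nu> {x. u x < 0}"
          by (rule finite_measure_mono[rotated]) (use False in \<open>auto simp: Sx_def\<close>)
        then show ?thesis using medn by linarith
      qed
      ultimately have eq: "(\<integral>\<^sup>+x. h * k x t \<partial>\<nu>) = h * ennreal (min (measure \<nu> (Sx t)) (measure \<nu> (space \<nu> - Sx t)))"
        using cS cS3 by simp
      have b1: "h * ennreal (min (measure \<nu> (Sx t)) (measure \<nu> (space \<nu> - Sx t))) \<le> m_perimeter m \<nu> (Sx t)"
        unfolding h_def by (rule cheeger_bound[OF P S Sxb])
      have b2: "h * ennreal (min (measure \<nu> (UNIV - Sx t)) (measure \<nu> (space \<nu> - (UNIV - Sx t)))) \<le> m_perimeter m \<nu> (UNIV - Sx t)"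
        unfolding h_def by (rule cheeger_bound[OF P S]) simp
      have "min (measure \<nu> (UNIV - Sx t)) (measure \<nu> (space \<nu> - (UNIV - Sx t))) = min (measure \<nu> (Sx t)) (measure \<nu> (space \<nu> - Sx t))"
        unfolding cS2 cS3 by simp
      with b1 b2 eq show ?thesis by (simp add: mult_2 add_mono)
    qed
  qed
  have absone: "(\<integral>\<^sup>+x. ennreal \<bar>u x\<bar> \<partial>\<nu>) = 1"
    using nn_integral_eq_integral[of \<nu> "\<lambda>x. \<bar>u x\<bar>"] int one by simp
  define A where "A = (\<integral>\<^sup>+x. (\<integral>\<^sup>+y. ennreal \<bar>u y - u x\<bar> \<partial>m x) \<partial>\<nu>)"
  have "A = (\<integral>\<^sup>+x. (\<integral>\<^sup>+y. (\<integral>\<^sup>+t. G x y t \<partial>lborel) \<partial>m x) \<partial>\<nu>)"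
    unfolding A_def G_def coarea_pt by simp
  also have "\<dots> = (\<integral>\<^sup>+x. (\<integral>\<^sup>+t. (\<integral>\<^sup>+y. G x y t \<partial>m x) \<partial>lborel) \<partial>\<nu>)"
    by (intro nn_integral_cong fub[OF sfm sfl Gm])
  also have "\<dots> = (\<integral>\<^sup>+t. (\<integral>\<^sup>+x. (\<integral>\<^sup>+y. G x y t \<partial>m x) \<partial>\<nu>) \<partial>lborel)"
    by (rule fub[OF sfn sfl Fm])
  also have "\<dots> = (\<integral>\<^sup>+t. m_perimeter m \<nu> (Sx t) + m_perimeter m \<nu> (UNIV - Sx t) \<partial>lborel)"
    by (simp only: s4)
  also have "\<dots> \<ge> (\<integral>\<^sup>+t. 2 * (\<integral>\<^sup>+x. h * k x t \<partial>\<nu>) \<partial>lborel)"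
    by (intro nn_integral_mono s5)
  finally have A1: "(\<integral>\<^sup>+t. 2 * (\<integral>\<^sup>+x. h * k x t \<partial>\<nu>) \<partial>lborel) \<le> A" .
  have "(\<integral>\<^sup>+t. 2 * (\<integral>\<^sup>+x. h * k x t \<partial>\<nu>) \<partial>lborel) = (\<integral>\<^sup>+t. (\<integral>\<^sup>+x. 2 * h * k x t \<partial>\<nu>) \<partial>lborel)"
  proof (intro nn_integral_cong)
    fix t
    have "(\<lambda>x. h * k x t) \<in> borel_measurable \<nu>"
      unfolding k_def indicator_def atLeastLessThan_iff by measurable
    then show "2 * (\<integral>\<^sup>+x. h * k x t \<partial>\<nu>) = (\<integral>\<^sup>+x. 2 * h * k x t \<partial>\<nu>)"
      by (simp add: nn_integral_cmult mult.assoc)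
  qed
  also have "\<dots> = (\<integral>\<^sup>+x. (\<integral>\<^sup>+t. 2 * h * k x t \<partial>lborel) \<partial>\<nu>)"
    by (rule fub[OF sfn sfl km, symmetric])
  also have "\<dots> = (\<integral>\<^sup>+x. 2 * h * ennreal \<bar>u x\<bar> \<partial>\<nu>)"
  proof (intro nn_integral_cong)
    fix x
    have "(\<lambda>t. k x t) \<in> borel_measurable lborel"
      unfolding k_def by simp
    then show "(\<integral>\<^sup>+t. 2 * h * k x t \<partial>lborel) = 2 * h * ennreal \<bar>u x\<bar>"
      using coarea_pt[of 0 "u x"] by (simp add: nn_integral_cmult k_def)
  qed
  also have "\<dots> = 2 * h"
    using absone by (simp add: nn_integral_cmult)
  finally have "2 * h \<le> A" using A1 by simp
  then have "2 * h / 2 \<le> A / 2" by (rule divide_right_mono_ennreal)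
  moreover have "2 * h / 2 = h"
    using ennreal_mult_divide_eq[of "2::ennreal" h] by (simp add: mult.commute)
  ultimately have "h \<le> A / 2" by simp
  then show ?thesis unfolding m_TV_def A_def[symmetric] h_def .
qed


lemma perim_compl:
  assumes S: "sets \<nu> = sets borel" and rev: "reversible_measure m \<nu>" and E: "E \<in> sets borel"
  shows "m_perimeter m \<nu> (UNIV - E) = m_perimeter m \<nu> E"
proof -
  have "UNIV - E \<in> sets \<nu>" "E \<in> sets \<nu>" using S E by auto
  from rev[unfolded reversible_measure_def, rule_format, OF this]
  show ?thesis unfolding m_perimeter_def by (simp add: double_diff)
qed

lemma upper_one:
  fixes m :: "'a::{polish_space,metric_space} \<Rightarrow> 'a measure" and \<nu> :: "'a measure"
  assumes mrw: "mrw_space m" and P: "prob_space \<nu>" and S: "sets \<nu> = sets borel"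
    and rev: "reversible_measure m \<nu>" and E: "E \<in> sets borel"
    and pos: "0 < measure \<nu> E" and half: "measure \<nu> E \<le> 1/2"
  shows "lambda1 m \<nu> \<le> m_perimeter m \<nu> E / ennreal (measure \<nu> E)"
proof -
  interpret prob_space \<nu> by fact
  define c where "c = measure \<nu> E"
  have cpos: "0 < c" using pos c_def by simp
  have sp: "space \<nu> = UNIV" using S by (metis sets_eq_imp_space_eq space_borel)
  have mx: "prob_space (m x)" "sets (m x) = sets borel" for x using mrw unfolding mrw_space_def by auto
  have kern: "(\<lambda>x. emeasure (m x) A) \<in> borel_measurable borel" if "A \<in> sets borel" for A
    using mrw that unfolding mrw_space_def by auto
  have kernu: "(\<lambda>x. emeasure (m x) B) \<in> borel_measurable \<nu>" if "B \<in> sets borel" for B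
    using kern[OF that] unfolding measurable_cong_sets[OF S refl, of borel] .
  have Ev[measurable]: "E \<in> sets \<nu>" using E S by simp
  define v where "v x = indicator E x / c" for x
  have vm: "v \<in> borel_measurable \<nu>" unfolding v_def by measurable
  have iE: "integrable \<nu> (indicator E :: 'a \<Rightarrow> real)"
    by (rule integrable_real_indicator) (auto simp: Ev less_top[symmetric])
  have vint: "integrable \<nu> v" unfolding v_def using iE by simp
  have "(\<integral>x. \<bar>v x\<bar> \<partial>\<nu>) = (\<integral>x. indicator E x / c \<partial>\<nu>)"
    unfolding v_def using cpos by (intro Bochner_Integration.integral_cong) (auto simp: indicator_def)
  also have "\<dots> = 1" using cpos Ev by (simp add: c_def)
  finally have vone: "(\<integral>x. \<bar>v x\<bar> \<partial>\<nu>) = 1" .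
  have vmed: "is_median \<nu> v 0"
  proof -
    have e1: "{x \<in> space \<nu>. v x < 0} = {}" using cpos by (auto simp: v_def indicator_def)
    have e2: "{x \<in> space \<nu>. v x > 0} = E" using cpos sp by (auto simp: v_def indicator_def)
    show ?thesis unfolding is_median_def e1 e2 using half by (simp add: prob_space c_def)
  qed
  have "lambda1 m \<nu> \<le> m_TV m \<nu> v"
    unfolding lambda1_def by (rule INF_lower) (use vm vint vone vmed in auto)
  also have "m_TV m \<nu> v = m_perimeter m \<nu> E / ennreal c"
  proof -
    have pw: "ennreal \<bar>v y - v x\<bar> = ennreal (1/c) * (indicator E x * indicator (UNIV - E) y + indicator (UNIV - E) x * indicator E y)" for x y
      using cpos by (auto simp: v_def indicator_def)
    have inner: "(\<integral>\<^sup>+y. ennreal \<bar>v y - v x\<bar> \<partial>m x) = ennreal (1/c) * (indicator E x * emeasure (m x) (UNIV - E) + indicator (UNIV - E) x * emeasure (m x) E)" for x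
    proof -
      have [measurable]: "E \<in> sets (m x)" using mx(2)[of x] E by simp
      have [measurable]: "UNIV - E \<in> sets (m x)" using mx(2)[of x] E by simp
      show ?thesis unfolding pw
        by (subst nn_integral_cmult, simp, subst nn_integral_add)
           (auto simp: nn_integral_cmult nn_integral_indicator simp del: Compl_eq_Diff_UNIV)
    qed
    have [measurable]: "(\<lambda>x. emeasure (m x) (UNIV - E)) \<in> borel_measurable \<nu>" by (rule kernu) (use E in simp)
    have [measurable]: "(\<lambda>x. emeasure (m x) E) \<in> borel_measurable \<nu>" by (rule kernu) (use E in simp)
    have [measurable]: "UNIV - E \<in> sets \<nu>" using E S by simp
    have "(\<integral>\<^sup>+x. (\<integral>\<^sup>+y. ennreal \<bar>v y - v x\<bar> \<partial>m x) \<partial>\<nu>)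
       = ennreal (1/c) * ((\<integral>\<^sup>+x. indicator E x * emeasure (m x) (UNIV - E) \<partial>\<nu>) + (\<integral>\<^sup>+x. indicator (UNIV - E) x * emeasure (m x) E \<partial>\<nu>))"
      unfolding inner
      by (subst nn_integral_cmult, measurable, subst nn_integral_add) (auto simp del: Compl_eq_Diff_UNIV)
    also have "\<dots> = ennreal (1/c) * (m_perimeter m \<nu> E + m_perimeter m \<nu> (UNIV - E))"
      unfolding m_perimeter_def by (simp add: double_diff)
    also have "\<dots> = 2 * (ennreal (1/c) * m_perimeter m \<nu> E)"
      using perim_compl[OF S rev E] by (simp add: mult_2 distrib_left)
    finally have eq: "(\<integral>\<^sup>+x. (\<integral>\<^sup>+y. ennreal \<bar>v y - v x\<bar> \<partial>m x) \<partial>\<nu>) = 2 * (ennreal (1/c) * m_perimeter m \<nu> E)" .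
    have "m_TV m \<nu> v = ennreal (1/c) * m_perimeter m \<nu> E"
      unfolding m_TV_def eq using ennreal_mult_divide_eq[of "2::ennreal" "ennreal (1/c) * m_perimeter m \<nu> E"]
      by (simp add: mult.commute)
    also have "\<dots> = m_perimeter m \<nu> E / ennreal c"
      using cpos by (simp add: divide_ennreal[symmetric] ennreal_times_divide mult.commute)
    finally show ?thesis .
  qed
  finally show ?thesis unfolding c_def .
qed


theorem theorem3p11:
  fixes m :: "'a::{polish_space,metric_space} \<Rightarrow> 'a measure" and \<nu> :: "'a measure"
  assumes "mrw_space m"
    and "prob_space \<nu>" and "sets \<nu> = sets borel"
    and "invariant_measure m \<nu>" and "reversible_measure m \<nu>"
  shows "cheeger_const m \<nu> = lambda1 m \<nu>"
proof (rule antisym)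
  note mrw = assms(1) and P = assms(2) and S = assms(3) and rev = assms(5)
  interpret prob_space \<nu> by fact
  have sp: "space \<nu> = UNIV" using S by (metis sets_eq_imp_space_eq space_borel)
  show "cheeger_const m \<nu> \<le> lambda1 m \<nu>"
    unfolding lambda1_def
    by (rule INF_greatest) (use lower[OF mrw P S] in auto)
  show "lambda1 m \<nu> \<le> cheeger_const m \<nu>"
    unfolding cheeger_const_def
  proof (rule INF_greatest)
    fix D assume "D \<in> {D \<in> sets \<nu>. 0 < measure \<nu> D \<and> measure \<nu> D < 1}"
    then have Dv: "D \<in> sets \<nu>" and p0: "0 < measure \<nu> D" and p1: "measure \<nu> D < 1" by auto
    have Db: "D \<in> sets borel" using Dv S by simp
    have cD: "measure \<nu> (space \<nu> - D) = 1 - measure \<nu> D" by (rule prob_compl) (rule Dv)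
    show "lambda1 m \<nu> \<le> m_perimeter m \<nu> D / ennreal (min (measure \<nu> D) (measure \<nu> (space \<nu> - D)))"
    proof (cases "measure \<nu> D \<le> 1/2")
      case True
      then have "min (measure \<nu> D) (measure \<nu> (space \<nu> - D)) = measure \<nu> D" using cD by simp
      then show ?thesis using upper_one[OF mrw P S rev Db p0 True] by simp
    next
      case False
      have Eb: "UNIV - D \<in> sets borel" using Db by simp
      have eqm: "measure \<nu> (UNIV - D) = 1 - measure \<nu> D" using cD sp by simp
      have "min (measure \<nu> D) (measure \<nu> (space \<nu> - D)) = measure \<nu> (UNIV - D)" using cD sp False by simp
      moreover have "lambda1 m \<nu> \<le> m_perimeter m \<nu> (UNIV - D) / ennreal (measure \<nu> (UNIV - D))"
        by (rule upper_one[OF mrw P S rev Eb]) (use eqm p1 False in auto)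
      ultimately show ?thesis using perim_compl[OF S rev Db] by simp
    qed
  qed
qed

end
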